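(* Assume $\ell=2$. Consider joint laws of $(Y^{(0)},Y^{(1)},D,Z)$ satisfying (Exclusion) $Y^{(d,0)}=Y^{(d,1)}$ a.s. (written $Y^{(d)}$), (Joint independence) $Z\perp(Y^{(0)},Y^{(1)})$, and (Outcome consistency) $Y=(1-D)Y^{(0)}+DY^{(1)}$. Then for every such law with observed law $\mathcal P$ of $(Y,D,Z)$, $$\max_{\mathbf v\in\mathcal V}\mathbf v^\top\mathbf p\le \mathbb E[Y^{(1)}-Y^{(0)}]\le-\max_{\mathbf v\in\mathcal V}\mathbf v^\top\bar{\mathbf p},$$ and the bounds are sharp: for every observed law $\mathcal P$ arising from such a law, there exist such laws inducing $\mathcal P$ attaining the lower bound and the upper bound respectively.
   Context: $D\in\{0,1\}$ treatment; $Y$ outcome with values $\gamma_0<\dots<\gamma_{n-1}$; instrument $Z\in\{0,1\}$ with $\mathcal P(Z=z)>0$; $[n]=\{0,\dots,n-1\}$; $Y^{(d,z)}$ potential outcomes. Vectors $\mathbf p,\bar{\mathbf p}\in\mathbb R^{4n}$: $p_{ydz}=\mathcal P(Y=\gamma_y,D=d\mid Z=z)$, $\bar p_{ydz}=p_{y(1-d)z}$, and $\mathbf v^\top\mathbf p=\sum_{y,d,z}v_{ydz}p_{ydz}$. $\mathcal V=\{\mathbf u(\mathbf B):\mathbf B\in S\}$, where $S=S_1\cup S_2\cup S_3\subseteq\{0,1\}^{n\times2\times2}$: $\mathbf B\in S_1$ iff some $t\in\{0,\dots,n-2\}$ has $B_{i00}=B_{i01}=1$ for $i\ge t$ and $B_{i00}\ne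 B_{i01}$ for $i<t$, $B_{i10}\ne B_{i11}$ for all $i$, and some $i,j$ have $B_{i10}=B_{j11}=1$; $\mathbf B\in S_2$ iff $B_{(n-1)00}=B_{(n-1)01}=B_{010}=B_{011}=1$, $B_{i00}\ne B_{i01}$ for $i<n-1$, $B_{j10}\ne B_{j11}$ for $j>0$; $\mathbf B\in S_3$ iff some $t\in\{1,\dots,n-1\}$ has $B_{i10}=B_{i11}=1$ for $i\le t$ and $B_{i10}\ne B_{i11}$ for $i>t$, $B_{i00}\ne B_{i01}$ for all $i$, and some $i,j$ have $B_{i00}=B_{j01}=1$. With $\alpha=-\gamma_0-\gamma_t$ on $S_1$, $-\gamma_0-\gamma_{n-1}$ on $S_2$, $-\gamma_t-\gamma_{n-1}$ on $S_3$: $u_{i00}=-\gamma_i-\alpha$ if $B_{i00}=1$ else $\gamma_0$; $u_{i10}=\gamma_i$ if $B_{i10}=1$ else $-\gamma_{n-1}-\alpha$; $u_{i01}=-\gamma_i$ if $B_{i01}=1$ else $\gamma_0+\alpha$; $u_{i11}=\gamma_i+\alpha$ if $B_{i11}=1$ else $-\gamma_{n-1}$. *)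

theory Defs
  imports Complex_Main
begin

text \<open>A joint law of (Y0, Y1, D, Z) where Y0 = gamma a, Y1 = gamma b, indices a b < n,
  D = d < 2, Z = z < 2, is represented by its probability mass function q a b d z.
  Exclusion is built in: the potential outcomes Y(d,z) do not depend on z.\<close>

definition PZ :: "nat \<Rightarrow> (nat \<Rightarrow> nat \<Rightarrow> nat \<Rightarrow> nat \<Rightarrow> real) \<Rightarrow> nat \<Rightarrow> real" where
  "PZ n q z = (\<Sum>a<n. \<Sum>b<n. \<Sum>d<2. q a b d z)"

definition PY01 :: "nat \<Rightarrow> (nat \<Rightarrow> nat \<Rightarrow> nat \<Rightarrow> nat \<Rightarrow> real) \<Rightarrow> nat \<Rightarrow> nat \<Rightarrow> real" where
  "PY01 n q a b = (\<Sum>d<2. \<Sum>z<2. q a b d z)"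

definition valid_law :: "nat \<Rightarrow> (nat \<Rightarrow> nat \<Rightarrow> nat \<Rightarrow> nat \<Rightarrow> real) \<Rightarrow> bool" where
  "valid_law n q \<longleftrightarrow>
     (\<forall>a b d z. 0 \<le> q a b d z) \<and>
     (\<forall>a b d z. (n \<le> a \<or> n \<le> b \<or> 2 \<le> d \<or> 2 \<le> z) \<longrightarrow> q a b d z = 0) \<and>
     (\<Sum>a<n. \<Sum>b<n. \<Sum>d<2. \<Sum>z<2. q a b d z) = 1 \<and>
     (\<forall>z<2. 0 < PZ n q z) \<and>
     (\<forall>a<n. \<forall>b<n. \<forall>z<2. (\<Sum>d<2. q a b d z) = PY01 n q a b * PZ n q z)"

text \<open>Observed joint law of (Y, D, Z), with Y = (1-D) Y0 + D Y1 (outcome consistency).\<close>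
definition obs :: "nat \<Rightarrow> (nat \<Rightarrow> nat \<Rightarrow> nat \<Rightarrow> nat \<Rightarrow> real) \<Rightarrow> nat \<Rightarrow> nat \<Rightarrow> nat \<Rightarrow> real" where
  "obs n q y d z = (\<Sum>a<n. \<Sum>b<n. if (if d = 0 then a else b) = y then q a b d z else 0)"

definition pvec :: "nat \<Rightarrow> (nat \<Rightarrow> nat \<Rightarrow> nat \<Rightarrow> nat \<Rightarrow> real) \<Rightarrow> nat \<Rightarrow> nat \<Rightarrow> nat \<Rightarrow> real" where
  "pvec n q y d z = obs n q y d z / PZ n q z"

definition pbar :: "nat \<Rightarrow> (nat \<Rightarrow> nat \<Rightarrow> nat \<Rightarrow> nat \<Rightarrow> real) \<Rightarrow> nat \<Rightarrow> nat \<Rightarrow> nat \<Rightarrow> real" where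
  "pbar n q y d z = pvec n q y (1 - d) z"

definition dotv :: "nat \<Rightarrow> (nat \<Rightarrow> nat \<Rightarrow> nat \<Rightarrow> real) \<Rightarrow> (nat \<Rightarrow> nat \<Rightarrow> nat \<Rightarrow> real) \<Rightarrow> real" where
  "dotv n v p = (\<Sum>y<n. \<Sum>d<2. \<Sum>z<2. v y d z * p y d z)"

definition ATE :: "(nat \<Rightarrow> real) \<Rightarrow> nat \<Rightarrow> (nat \<Rightarrow> nat \<Rightarrow> nat \<Rightarrow> nat \<Rightarrow> real) \<Rightarrow> real" where
  "ATE \<gamma> n q = (\<Sum>a<n. \<Sum>b<n. \<Sum>d<2. \<Sum>z<2. q a b d z * (\<gamma> b - \<gamma> a))"

definition uvec :: "(nat \<Rightarrow> real) \<Rightarrow> nat \<Rightarrow> real \<Rightarrow> (nat \<Rightarrow> nat \<Rightarrow> nat \<Rightarrow> bool) \<Rightarrow> nat \<Rightarrow> nat \<Rightarrow> nat \<Rightarrow> real" where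
  "uvec \<gamma> n \<alpha> B i d z =
     (if i < n then
        (if d = 0 \<and> z = 0 then (if B i 0 0 then - \<gamma> i - \<alpha> else \<gamma> 0)
         else if d = 1 \<and> z = 0 then (if B i 1 0 then \<gamma> i else - \<gamma> (n - 1) - \<alpha>)
         else if d = 0 \<and> z = 1 then (if B i 0 1 then - \<gamma> i else \<gamma> 0 + \<alpha>)
         else if d = 1 \<and> z = 1 then (if B i 1 1 then \<gamma> i + \<alpha> else - \<gamma> (n - 1))
         else 0)
      else 0)"

definition S1 :: "nat \<Rightarrow> nat \<Rightarrow> (nat \<Rightarrow> nat \<Rightarrow> nat \<Rightarrow> bool) \<Rightarrow> bool" where
  "S1 n t B \<longleftrightarrow> t + 2 \<le> n \<and>
     (\<forall>i. t \<le> i \<and> i < n \<longrightarrow> B i 0 0 \<and> B i 0 1) \<and>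
     (\<forall>i<t. B i 0 0 \<noteq> B i 0 1) \<and>
     (\<forall>i<n. B i 1 0 \<noteq> B i 1 1) \<and>
     (\<exists>i<n. \<exists>j<n. B i 1 0 \<and> B j 1 1)"

definition S2 :: "nat \<Rightarrow> (nat \<Rightarrow> nat \<Rightarrow> nat \<Rightarrow> bool) \<Rightarrow> bool" where
  "S2 n B \<longleftrightarrow> B (n - 1) 0 0 \<and> B (n - 1) 0 1 \<and> B 0 1 0 \<and> B 0 1 1 \<and>
     (\<forall>i. i + 1 < n \<longrightarrow> B i 0 0 \<noteq> B i 0 1) \<and>
     (\<forall>j. 0 < j \<and> j < n \<longrightarrow> B j 1 0 \<noteq> B j 1 1)"

definition S3 :: "nat \<Rightarrow> nat \<Rightarrow> (nat \<Rightarrow> nat \<Rightarrow> nat \<Rightarrow> bool) \<Rightarrow> bool" where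
  "S3 n t B \<longleftrightarrow> 1 \<le> t \<and> t + 1 \<le> n \<and>
     (\<forall>i\<le>t. B i 1 0 \<and> B i 1 1) \<and>
     (\<forall>i. t < i \<and> i < n \<longrightarrow> B i 1 0 \<noteq> B i 1 1) \<and>
     (\<forall>i<n. B i 0 0 \<noteq> B i 0 1) \<and>
     (\<exists>i<n. \<exists>j<n. B i 0 0 \<and> B j 0 1)"

definition Vset :: "(nat \<Rightarrow> real) \<Rightarrow> nat \<Rightarrow> (nat \<Rightarrow> nat \<Rightarrow> nat \<Rightarrow> real) set" where
  "Vset \<gamma> n =
     {uvec \<gamma> n (- \<gamma> 0 - \<gamma> t) B | t B. S1 n t B} \<union>
     {uvec \<gamma> n (- \<gamma> 0 - \<gamma> (n - 1)) B | B. S2 n B} \<union>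
     {uvec \<gamma> n (- \<gamma> t - \<gamma> (n - 1)) B | t B. S3 n t B}"

definition lower_bd :: "(nat \<Rightarrow> real) \<Rightarrow> nat \<Rightarrow> (nat \<Rightarrow> nat \<Rightarrow> nat \<Rightarrow> nat \<Rightarrow> real) \<Rightarrow> real" where
  "lower_bd \<gamma> n q = Max ((\<lambda>v. dotv n v (pvec n q)) ` Vset \<gamma> n)"

definition upper_bd :: "(nat \<Rightarrow> real) \<Rightarrow> nat \<Rightarrow> (nat \<Rightarrow> nat \<Rightarrow> nat \<Rightarrow> nat \<Rightarrow> real) \<Rightarrow> real" where
  "upper_bd \<gamma> n q = - Max ((\<lambda>v. dotv n v (pbar n q)) ` Vset \<gamma> n)"

end

theory Submission
  imports Defs
begin

lemma sum2: "sum f {..<2::nat} = f 0 + f 1"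
  by (simp add: numeral_2_eq_2)

lemma obs0: "y < n \<Longrightarrow> obs n q y 0 z = (\<Sum>b<n. q y b 0 z)"
  unfolding obs_def by (simp add: sum.swap[of _ "{..<n}" "{..<n}"] )

lemma obs1: "y < n \<Longrightarrow> obs n q y 1 z = (\<Sum>a<n. q a y 1 z)"
  unfolding obs_def by simp

lemma dotv_expand: "dotv n v p = (\<Sum>y<n. v y 0 0 * p y 0 0 + v y 0 1 * p y 0 1 + v y 1 0 * p y 1 0 + v y 1 1 * p y 1 1)"
  unfolding dotv_def by (simp add: sum2 algebra_simps)

locale vl =
  fixes g :: "nat \<Rightarrow> real" and n :: nat and q :: "nat \<Rightarrow> nat \<Rightarrow> nat \<Rightarrow> nat \<Rightarrow> real"
  assumes mono: "\<And>i j. i < j \<Longrightarrow> j < n \<Longrightarrow> g i < g j"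
    and law: "valid_law n q"
begin

lemma gle: "i \<le> j \<Longrightarrow> j < n \<Longrightarrow> g i \<le> g j"
  using mono by (cases "i = j") (auto simp: less_le)

lemma nonneg: "0 \<le> q a b d z" using law unfolding valid_law_def by blast

lemma total: "(\<Sum>a<n. \<Sum>b<n. \<Sum>d<2. \<Sum>z<2. q a b d z) = 1"
  using law unfolding valid_law_def by blast

lemma n_pos: "0 < n"
  using total by (cases n) auto

definition P where "P z = PZ n q z"

lemma Ppos: "z < 2 \<Longrightarrow> 0 < P z" using law unfolding valid_law_def P_def by blast

lemma indep: "a < n \<Longrightarrow> b < n \<Longrightarrow> z < 2 \<Longrightarrow> q a b 0 z + q a b 1 z = PY01 n q a b * P z"
  using law unfolding valid_law_def P_def by (simp add: sum2)

lemma Psum: "P 0 + P 1 = 1"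
proof -
  have "P 0 + P 1 = (\<Sum>a<n. \<Sum>b<n. \<Sum>d<2. \<Sum>z<2. q a b d z)"
    unfolding P_def PZ_def by (simp add: sum2 sum.distrib algebra_simps)
  then show ?thesis using total by simp
qed

lemma Psum1: "P 0 + P (Suc 0) = 1" using Psum by simp

definition pi where "pi a b = PY01 n q a b"

lemma pi_nonneg: "0 \<le> pi a b"
  unfolding pi_def PY01_def by (intro sum_nonneg) (simp add: nonneg)

definition s where "s a b z = q a b 0 z / P z"
definition w where "w a b z = q a b 1 z / P z"

lemma s_nonneg: "0 \<le> s a b z" unfolding s_def P_def
  by (simp add: nonneg PZ_def sum_nonneg)
lemma w_nonneg: "0 \<le> w a b z" unfolding w_def P_def
  by (simp add: nonneg PZ_def sum_nonneg)

lemma sw: "a < n \<Longrightarrow> b < n \<Longrightarrow> z < 2 \<Longrightarrow> s a b z + w a b z = pi a b"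
  using indep[of a b z] Ppos[of z] unfolding s_def w_def pi_def
  by (simp add: add_divide_distrib[symmetric])

lemma pvec0: "y < n \<Longrightarrow> pvec n q y 0 z = (\<Sum>b<n. s y b z)"
  unfolding pvec_def s_def P_def by (simp add: obs0 sum_divide_distrib)

lemma pvec1: "y < n \<Longrightarrow> pvec n q y 1 z = (\<Sum>a<n. w a y z)"
  unfolding pvec_def w_def P_def by (simp only: obs1) (simp add: sum_divide_distrib)

lemma pvec1s: "y < n \<Longrightarrow> pvec n q y (Suc 0) z = (\<Sum>a<n. w a y z)"
  using pvec1 by simp

lemma ATE_pi: "ATE g n q = (\<Sum>a<n. \<Sum>b<n. pi a b * (g b - g a))"
proof -
  have "ATE g n q = (\<Sum>a<n. \<Sum>b<n. (q a b 0 0 + q a b 1 0 + (q a b 0 1 + q a b 1 1)) * (g b - g a))"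
    unfolding ATE_def by (simp add: sum2 algebra_simps)
  also have "\<dots> = (\<Sum>a<n. \<Sum>b<n. pi a b * (P 0 + P 1) * (g b - g a))"
  proof (intro sum.cong refl)
    fix a b assume "a \<in> {..<n}" "b \<in> {..<n}"
    then show "(q a b 0 0 + q a b 1 0 + (q a b 0 1 + q a b 1 1)) * (g b - g a) = pi a b * (P 0 + P 1) * (g b - g a)"
      using indep[of a b 0] indep[of a b 1] by (simp add: pi_def algebra_simps)
  qed
  finally show ?thesis by (simp add: Psum1)
qed

lemma valid_bound:
  fixes \<alpha> :: real and B :: "nat \<Rightarrow> nat \<Rightarrow> nat \<Rightarrow> bool"
  assumes C1: "\<And>a. a < n \<Longrightarrow> B a 0 0 \<and> B a 0 1 \<Longrightarrow> -\<alpha> \<le> g 0 + g a"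
    and C2: "\<And>a. a < n \<Longrightarrow> \<not>(B a 0 0 \<and> B a 0 1) \<Longrightarrow> g 0 + g a \<le> -\<alpha>"
    and C3: "\<And>b. b < n \<Longrightarrow> B b 1 0 \<and> B b 1 1 \<Longrightarrow> g (n-1) + g b \<le> -\<alpha>"
    and C4: "\<And>b. b < n \<Longrightarrow> \<not>(B b 1 0 \<and> B b 1 1) \<Longrightarrow> -\<alpha> \<le> g (n-1) + g b"
  shows "dotv n (uvec g n \<alpha> B) (pvec n q) \<le> ATE g n q"
proof -
  define U where "U = uvec g n \<alpha> B"
  have pw: "max (U a 0 0) (U b 1 0) + max (U a 0 1) (U b 1 1) \<le> g b - g a"
    if ab: "a < n" "b < n" for a b
  proof -
    have h1: "g 0 \<le> g b" "g a \<le> g (n-1)" using gle ab by auto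
    show ?thesis
      using C1[OF ab(1)] C2[OF ab(1)] C3[OF ab(2)] C4[OF ab(2)] h1 ab
      unfolding U_def uvec_def by (auto simp: max_def)
  qed
  have "dotv n U (pvec n q) = (\<Sum>y<n. U y 0 0 * (\<Sum>b<n. s y b 0) + U y 0 1 * (\<Sum>b<n. s y b 1)
       + U y 1 0 * (\<Sum>a<n. w a y 0) + U y 1 1 * (\<Sum>a<n. w a y 1))"
    unfolding dotv_expand by (intro sum.cong refl) (simp add: pvec0 pvec1 pvec1s)
  also have "\<dots> = (\<Sum>a<n. \<Sum>b<n. U a 0 0 * s a b 0 + U a 0 1 * s a b 1)
       + (\<Sum>b<n. \<Sum>a<n. U b 1 0 * w a b 0 + U b 1 1 * w a b 1)"
    by (simp add: sum.distrib sum_distrib_left algebra_simps)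
  also have "\<dots> = (\<Sum>a<n. \<Sum>b<n. U a 0 0 * s a b 0 + U a 0 1 * s a b 1 + U b 1 0 * w a b 0 + U b 1 1 * w a b 1)"
    by (subst (2) sum.swap) (simp add: sum.distrib algebra_simps)
  also have "\<dots> \<le> (\<Sum>a<n. \<Sum>b<n. pi a b * (g b - g a))"
  proof (intro sum_mono)
    fix a b assume a: "a \<in> {..<n}" and b: "b \<in> {..<n}"
    have e0: "U a 0 0 * s a b 0 + U b 1 0 * w a b 0 \<le> max (U a 0 0) (U b 1 0) * pi a b"
    proof -
      have "U a 0 0 * s a b 0 + U b 1 0 * w a b 0 \<le> max (U a 0 0) (U b 1 0) * s a b 0 + max (U a 0 0) (U b 1 0) * w a b 0"
        by (intro add_mono mult_right_mono) (auto simp: s_nonneg w_nonneg)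
      moreover have "max (U a 0 0) (U b 1 0) * s a b 0 + max (U a 0 0) (U b 1 0) * w a b 0 = max (U a 0 0) (U b 1 0) * pi a b"
        using sw[of a b 0] a b by (simp only: distrib_left[symmetric]) simp
      ultimately show ?thesis by linarith
    qed
    have e1: "U a 0 1 * s a b 1 + U b 1 1 * w a b 1 \<le> max (U a 0 1) (U b 1 1) * pi a b"
    proof -
      have "U a 0 1 * s a b 1 + U b 1 1 * w a b 1 \<le> max (U a 0 1) (U b 1 1) * s a b 1 + max (U a 0 1) (U b 1 1) * w a b 1"
        by (intro add_mono mult_right_mono) (auto simp: s_nonneg w_nonneg)
      moreover have "max (U a 0 1) (U b 1 1) * s a b 1 + max (U a 0 1) (U b 1 1) * w a b 1 = max (U a 0 1) (U b 1 1) * pi a b"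
        using sw[of a b 1] a b by (simp only: distrib_left[symmetric]) simp
      ultimately show ?thesis by linarith
    qed
    have "(max (U a 0 0) (U b 1 0) + max (U a 0 1) (U b 1 1)) * pi a b \<le> (g b - g a) * pi a b"
      using pw[of a b] a b pi_nonneg by (intro mult_right_mono) auto
    then show "U a 0 0 * s a b 0 + U a 0 1 * s a b 1 + U b 1 0 * w a b 0 + U b 1 1 * w a b 1 \<le> pi a b * (g b - g a)"
      using e0 e1 by (simp add: algebra_simps)
  qed
  finally show ?thesis unfolding U_def ATE_pi .
qed

end

context vl begin

lemma S1_valid: assumes "S1 n t B" shows "dotv n (uvec g n (- g 0 - g t) B) (pvec n q) \<le> ATE g n q"
proof (rule valid_bound)
  from assms have t: "t + 2 \<le> n" and A1: "\<And>i. t \<le> i \<Longrightarrow> i < n \<Longrightarrow> B i 0 0 \<and> B i 0 1"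
    and A2: "\<And>i. i < t \<Longrightarrow> B i 0 0 \<noteq> B i 0 1" and A3: "\<And>i. i < n \<Longrightarrow> B i 1 0 \<noteq> B i 1 1"
    unfolding S1_def by auto
  show "- (- g 0 - g t) \<le> g 0 + g a" if "a < n" "B a 0 0 \<and> B a 0 1" for a
  proof -
    have "t \<le> a" using A2[of a] that by (cases "a < t") auto
    then show ?thesis using gle[of t a] that by simp
  qed
  show "g 0 + g a \<le> - (- g 0 - g t)" if "a < n" "\<not> (B a 0 0 \<and> B a 0 1)" for a
  proof -
    have "a < t" using A1[of a] that by (cases "t \<le> a") auto
    then show ?thesis using gle[of a t] t by simp
  qed
  show "g (n - 1) + g b \<le> - (- g 0 - g t)" if "b < n" "B b 1 0 \<and> B b 1 1" for b
    using A3[of b] that by simp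
  show "- (- g 0 - g t) \<le> g (n - 1) + g b" if "b < n" "\<not> (B b 1 0 \<and> B b 1 1)" for b
  proof -
    have "g t \<le> g (n-1)" "g 0 \<le> g b" using t that by (intro gle; simp)+
    then show ?thesis by simp
  qed
qed

lemma S2_valid: assumes "S2 n B" shows "dotv n (uvec g n (- g 0 - g (n - 1)) B) (pvec n q) \<le> ATE g n q"
proof (rule valid_bound)
  from assms have A2: "\<And>i. i + 1 < n \<Longrightarrow> B i 0 0 \<noteq> B i 0 1"
    and A3: "\<And>j. 0 < j \<Longrightarrow> j < n \<Longrightarrow> B j 1 0 \<noteq> B j 1 1"
    unfolding S2_def by auto
  show "- (- g 0 - g (n - 1)) \<le> g 0 + g a" if "a < n" "B a 0 0 \<and> B a 0 1" for a
  proof -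
    have "a = n - 1" using A2[of a] that by (cases "a + 1 < n") auto
    then show ?thesis by simp
  qed
  show "g 0 + g a \<le> - (- g 0 - g (n - 1))" if "a < n" "\<not> (B a 0 0 \<and> B a 0 1)" for a
  proof -
    have "g a \<le> g (n-1)" using that by (intro gle; simp)
    then show ?thesis by simp
  qed
  show "g (n - 1) + g b \<le> - (- g 0 - g (n - 1))" if "b < n" "B b 1 0 \<and> B b 1 1" for b
  proof -
    have "b = 0" using A3[of b] that by (cases "0 < b") auto
    then show ?thesis by simp
  qed
  show "- (- g 0 - g (n - 1)) \<le> g (n - 1) + g b" if "b < n" "\<not> (B b 1 0 \<and> B b 1 1)" for b
    using gle[of 0 b] that by simp
qed

lemma S3_valid: assumes "S3 n t B" shows "dotv n (uvec g n (- g t - g (n - 1)) B) (pvec n q) \<le> ATE g n q"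
proof (rule valid_bound)
  from assms have t: "1 \<le> t" "t + 1 \<le> n" and A1: "\<And>i. i \<le> t \<Longrightarrow> B i 1 0 \<and> B i 1 1"
    and A2: "\<And>i. t < i \<Longrightarrow> i < n \<Longrightarrow> B i 1 0 \<noteq> B i 1 1" and A3: "\<And>i. i < n \<Longrightarrow> B i 0 0 \<noteq> B i 0 1"
    unfolding S3_def by auto
  show "- (- g t - g (n - 1)) \<le> g 0 + g a" if "a < n" "B a 0 0 \<and> B a 0 1" for a
    using A3[of a] that by simp
  show "g 0 + g a \<le> - (- g t - g (n - 1))" if "a < n" "\<not> (B a 0 0 \<and> B a 0 1)" for a
  proof -
    have "g 0 \<le> g t" "g a \<le> g (n-1)" using t that by (intro gle; simp)+
    then show ?thesis by simp
  qed
  show "g (n - 1) + g b \<le> - (- g t - g (n - 1))" if "b < n" "B b 1 0 \<and> B b 1 1" for b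
  proof -
    have "b \<le> t" using A2[of b] that by (cases "t < b") auto
    then show ?thesis using gle[of b t] t by simp
  qed
  show "- (- g t - g (n - 1)) \<le> g (n - 1) + g b" if "b < n" "\<not> (B b 1 0 \<and> B b 1 1)" for b
  proof -
    have "t < b" using A1[of b] that by (cases "b \<le> t") auto
    then show ?thesis using gle[of t b] that by simp
  qed
qed

lemma V_valid: assumes "v \<in> Vset g n" shows "dotv n v (pvec n q) \<le> ATE g n q"
  using assms S1_valid S2_valid S3_valid unfolding Vset_def by blast

end

context vl begin

definition x0 where "x0 i = pvec n q i 0 0"
definition x1 where "x1 i = pvec n q i 0 1"
definition y0 where "y0 i = pvec n q i 1 0"
definition y1 where "y1 i = pvec n q i 1 1"
definition c where "c i = g 0 + g i"
definition d where "d i = g (n - 1) + g i"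
definition m where "m i = min (x0 i) (x1 i)"
definition k where "k i = min (y0 i) (y1 i)"
definition pos :: "real \<Rightarrow> real" where "pos r = max r 0"

definition tau where "tau l i = - g i * (x0 i + x1 i) + l * x0 i - m i * pos (l - c i)
   + g i * (y0 i + y1 i) - l * y1 i - k i * pos (d i - l)"
definition T where "T l = (\<Sum>i<n. tau l i)"

definition Agood where "Agood l B i \<longleftrightarrow> (B i 0 0 \<and> B i 0 1 \<and> l \<le> c i) \<or>
   (B i 0 0 \<and> \<not> B i 0 1 \<and> x1 i \<le> x0 i \<and> c i \<le> l) \<or> (\<not> B i 0 0 \<and> B i 0 1 \<and> x0 i \<le> x1 i \<and> c i \<le> l)"
definition Bgood where "Bgood l B i \<longleftrightarrow> (B i 1 0 \<and> B i 1 1 \<and> d i \<le> l) \<or>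
   (B i 1 0 \<and> \<not> B i 1 1 \<and> y1 i \<le> y0 i \<and> l \<le> d i) \<or> (\<not> B i 1 0 \<and> B i 1 1 \<and> y0 i \<le> y1 i \<and> l \<le> d i)"

lemma pos1: "0 \<le> r \<Longrightarrow> pos r = r" unfolding pos_def by simp
lemma pos0: "r \<le> 0 \<Longrightarrow> pos r = 0" unfolding pos_def by simp
lemma pos_nonneg: "0 \<le> pos r" unfolding pos_def by simp

lemma value_eq:
  assumes "\<And>i. i < n \<Longrightarrow> Agood (- \<alpha>) B i" "\<And>i. i < n \<Longrightarrow> Bgood (- \<alpha>) B i"
  shows "dotv n (uvec g n \<alpha> B) (pvec n q) = T (- \<alpha>)"
  unfolding dotv_expand T_def
proof (intro sum.cong refl)
  fix i assume i: "i \<in> {..<n}"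
  have A: "uvec g n \<alpha> B i 0 0 * x0 i + uvec g n \<alpha> B i 0 1 * x1 i
      = - g i * (x0 i + x1 i) + (-\<alpha>) * x0 i - m i * pos (-\<alpha> - c i)"
    using assms(1)[of i] i unfolding Agood_def
    by (simp, elim disjE) (auto simp: uvec_def m_def c_def pos0 pos1 min_def algebra_simps)
  have Bq: "uvec g n \<alpha> B i 1 0 * y0 i + uvec g n \<alpha> B i 1 1 * y1 i
      = g i * (y0 i + y1 i) - (-\<alpha>) * y1 i - k i * pos (d i - (-\<alpha>))"
    using assms(2)[of i] i unfolding Bgood_def
    by (simp, elim disjE) (auto simp: uvec_def k_def d_def pos0 pos1 min_def algebra_simps)
  show "uvec g n \<alpha> B i 0 0 * pvec n q i 0 0 + uvec g n \<alpha> B i 0 1 * pvec n q i 0 1 +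
        uvec g n \<alpha> B i 1 0 * pvec n q i 1 0 + uvec g n \<alpha> B i 1 1 * pvec n q i 1 1 = tau (- \<alpha>) i"
    using A Bq unfolding tau_def x0_def x1_def y0_def y1_def by simp
qed

end

context vl begin

lemma mass: assumes z: "z < 2" shows "(\<Sum>i<n. pvec n q i 0 z + pvec n q i 1 z) = 1"
proof -
  have "(\<Sum>i<n. pvec n q i 0 z + pvec n q i 1 z) = (\<Sum>i<n. (\<Sum>b<n. s i b z) + (\<Sum>a<n. w a i z))"
    by (intro sum.cong refl) (simp add: pvec0 pvec1s)
  also have "\<dots> = (\<Sum>a<n. \<Sum>b<n. s a b z + w a b z)"
    by (simp add: sum.distrib) (subst sum.swap, simp)
  also have "\<dots> = (\<Sum>a<n. \<Sum>b<n. (\<Sum>d<2. q a b d z) / P z)"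
    by (intro sum.cong refl) (simp add: s_def w_def sum2 add_divide_distrib)
  also have "\<dots> = PZ n q z / P z" unfolding PZ_def by (simp add: sum_divide_distrib)
  also have "\<dots> = 1" using Ppos[OF z] unfolding P_def by simp
  finally show ?thesis .
qed

lemma pvec_nonneg: "0 \<le> pvec n q i dd z"
  unfolding pvec_def obs_def PZ_def by (intro divide_nonneg_nonneg sum_nonneg) (auto simp: nonneg)

lemma x0n: "0 \<le> x0 i" and x1n: "0 \<le> x1 i" and y0n: "0 \<le> y0 i" and y1n: "0 \<le> y1 i"
  unfolding x0_def x1_def y0_def y1_def by (simp_all add: pvec_nonneg)

lemma mass0: "(\<Sum>i<n. x0 i + y0 i) = 1" using mass[of 0] unfolding x0_def y0_def by simp
lemma mass1: "(\<Sum>i<n. x1 i + y1 i) = 1" using mass[of 1] unfolding x1_def y1_def by simp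

lemma pos_lip: "l \<le> u \<Longrightarrow> pos (u - a) - pos (l - a) \<le> u - l" unfolding pos_def by simp
lemma pos_mono: "l \<le> u \<Longrightarrow> pos (l - a) \<le> pos (u - a)" unfolding pos_def by simp

lemma E1:
  assumes all: "(\<forall>i<n. y1 i \<le> y0 i) \<or> (\<forall>i<n. \<not> y1 i \<le> y0 i)"
    and l: "l \<le> c (n - 1)"
  shows "T l \<le> T (c (n - 1))"
proof -
  define u where "u = c (n - 1)"
  have dge: "u \<le> d i" if "i < n" for i
  proof -
    have "g 0 \<le> g i" using that by (intro gle) auto
    then show ?thesis unfolding u_def c_def d_def by simp
  qed
  have key: "(\<Sum>i<n. x0 i - y1 i + k i - m i) \<ge> 0"
    using all
  proof
    assume h: "\<forall>i<n. y1 i \<le> y0 i"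
    have "(\<Sum>i<n. x0 i - y1 i + k i - m i) = (\<Sum>i<n. x0 i - m i)"
      by (intro sum.cong refl) (use h in \<open>auto simp: k_def min_def\<close>)
    also have "\<dots> \<ge> 0" by (intro sum_nonneg) (auto simp: m_def)
    finally show ?thesis .
  next
    assume h: "\<forall>i<n. \<not> y1 i \<le> y0 i"
    have "(\<Sum>i<n. x0 i - y1 i + k i - m i) = (\<Sum>i<n. x0 i + y0 i) - (\<Sum>i<n. x1 i + y1 i) + (\<Sum>i<n. x1 i - m i)"
      by (simp add: sum_subtractf[symmetric] sum.distrib[symmetric]) (intro sum.cong refl, use h in \<open>auto simp: k_def min_def\<close>)
    also have "\<dots> = (\<Sum>i<n. x1 i - m i)" using mass0 mass1 by simp
    also have "\<dots> \<ge> 0" by (intro sum_nonneg) (auto simp: m_def)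
    finally show ?thesis .
  qed
  have "0 \<le> (u - l) * (\<Sum>i<n. x0 i - y1 i + k i - m i)" using key l unfolding u_def by simp
  also have "\<dots> = (\<Sum>i<n. (u - l) * (x0 i - y1 i + k i - m i))"
    by (simp add: sum_distrib_left)
  also have "\<dots> \<le> (\<Sum>i<n. tau u i - tau l i)"
  proof (intro sum_mono)
    fix i assume i: "i \<in> {..<n}"
    have p1: "pos (d i - l) = d i - l" "pos (d i - u) = d i - u" using dge[of i] i l unfolding u_def
      by (auto intro!: pos1)
    have mi: "0 \<le> m i" unfolding m_def using x0n x1n by simp
    have "m i * (pos (u - c i) - pos (l - c i)) \<le> m i * (u - l)"
      using pos_lip[of l u "c i"] l mi unfolding u_def by (intro mult_left_mono) auto
    then show "(u - l) * (x0 i - y1 i + k i - m i) \<le> tau u i - tau l i"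
      unfolding tau_def p1 by (simp add: algebra_simps)
  qed
  also have "\<dots> = T u - T l" unfolding T_def by (simp add: sum_subtractf)
  finally show ?thesis unfolding u_def by simp
qed

lemma E2:
  assumes all: "(\<forall>i<n. x1 i \<le> x0 i) \<or> (\<forall>i<n. \<not> x1 i \<le> x0 i)"
    and l: "c (n - 1) \<le> l"
  shows "T l \<le> T (c (n - 1))"
proof -
  define u where "u = c (n - 1)"
  have cle: "c i \<le> u" if "i < n" for i
  proof -
    have "g i \<le> g (n-1)" using that by (intro gle) auto
    then show ?thesis unfolding u_def c_def by simp
  qed
  have key: "(\<Sum>i<n. x0 i - m i - y1 i + k i) \<le> 0"
    using all
  proof
    assume h: "\<forall>i<n. x1 i \<le> x0 i"
    have "(\<Sum>i<n. x0 i - m i - y1 i + k i) = (\<Sum>i<n. x0 i + y0 i) - (\<Sum>i<n. x1 i + y1 i) + (\<Sum>i<n. k i - y0 i)"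
      by (simp add: sum_subtractf[symmetric] sum.distrib[symmetric]) (intro sum.cong refl, use h in \<open>auto simp: m_def min_def\<close>)
    also have "\<dots> = (\<Sum>i<n. k i - y0 i)" using mass0 mass1 by simp
    also have "\<dots> \<le> 0" by (intro sum_nonpos) (auto simp: k_def)
    finally show ?thesis .
  next
    assume h: "\<forall>i<n. \<not> x1 i \<le> x0 i"
    have "(\<Sum>i<n. x0 i - m i - y1 i + k i) = (\<Sum>i<n. k i - y1 i)"
      by (intro sum.cong refl) (use h in \<open>auto simp: m_def min_def\<close>)
    also have "\<dots> \<le> 0" by (intro sum_nonpos) (auto simp: k_def)
    finally show ?thesis .
  qed
  have "T l - T u = (\<Sum>i<n. tau l i - tau u i)" unfolding T_def by (simp add: sum_subtractf)
  also have "\<dots> \<le> (\<Sum>i<n. (l - u) * (x0 i - m i - y1 i + k i))"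
  proof (intro sum_mono)
    fix i assume i: "i \<in> {..<n}"
    have p1: "pos (l - c i) = l - c i" "pos (u - c i) = u - c i" using cle[of i] i l unfolding u_def
      by (auto intro!: pos1)
    have ki: "0 \<le> k i" unfolding k_def using y0n y1n by simp
    have "k i * (pos (d i - u) - pos (d i - l)) \<le> k i * (l - u)"
    proof -
      have "pos (d i - u) - pos (d i - l) \<le> l - u" using l unfolding pos_def u_def by auto
      then show ?thesis using ki by (intro mult_left_mono) auto
    qed
    then show "tau l i - tau u i \<le> (l - u) * (x0 i - m i - y1 i + k i)"
      unfolding tau_def p1 by (simp add: algebra_simps)
  qed
  also have "(\<Sum>i<n. (l - u) * (x0 i - m i - y1 i + k i)) = (l - u) * (\<Sum>i<n. x0 i - m i - y1 i + k i)"
    by (simp add: sum_distrib_left)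
  also have "\<dots> \<le> 0" using key l unfolding u_def by (simp add: mult_nonneg_nonpos)
  finally show ?thesis unfolding u_def by simp
qed

end

context vl begin

definition chA where "chA i \<longleftrightarrow> x1 i \<le> x0 i"
definition chB where "chB i \<longleftrightarrow> y1 i \<le> y0 i"

lemma S2_val: "\<exists>v\<in>Vset g n. dotv n v (pvec n q) = T (c (n - 1))"
proof -
  define B where "B i dd z = (if dd = 0 then (if i = n - 1 then True else (if z = 0 then chA i else \<not> chA i))
      else (if i = 0 then True else (if z = 0 then chB i else \<not> chB i)))" for i dd z :: nat
  have S: "S2 n B" unfolding S2_def B_def by auto
  have eq: "- (- g 0 - g (n - 1)) = c (n - 1)" unfolding c_def by simp
  have val: "dotv n (uvec g n (- g 0 - g (n - 1)) B) (pvec n q) = T (- (- g 0 - g (n - 1)))"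
  proof (rule value_eq)
    fix i assume i: "i < n"
    have "g i \<le> g (n - 1)" "g 0 \<le> g i" using i by (intro gle; simp)+
    then show "Agood (- (- g 0 - g (n - 1))) B i" "Bgood (- (- g 0 - g (n - 1))) B i"
      unfolding Agood_def Bgood_def B_def c_def d_def chA_def chB_def by auto
  qed
  have mem: "uvec g n (- g 0 - g (n - 1)) B \<in> Vset g n" using S unfolding Vset_def by blast
  show ?thesis using val[unfolded eq] mem by blast
qed

lemma S1_val:
  assumes t: "t + 2 \<le> n" and ex: "\<exists>i<n. chB i" "\<exists>j<n. \<not> chB j"
  shows "\<exists>v\<in>Vset g n. dotv n v (pvec n q) = T (c t)"
proof -
  define B where "B i dd z = (if dd = 0 then (if t \<le> i then True else (if z = 0 then chA i else \<not> chA i))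
      else (if z = 0 then chB i else \<not> chB i))" for i dd z :: nat
  have S: "S1 n t B" using t ex unfolding S1_def B_def by auto
  have eq: "- (- g 0 - g t) = c t" unfolding c_def by simp
  have val: "dotv n (uvec g n (- g 0 - g t) B) (pvec n q) = T (- (- g 0 - g t))"
  proof (rule value_eq)
    fix i assume i: "i < n"
    have "g t \<le> g (n - 1)" "g 0 \<le> g i" using i t by (intro gle; simp)+
    moreover have "t \<le> i \<Longrightarrow> g t \<le> g i" "i < t \<Longrightarrow> g i \<le> g t" using i t by (intro gle; simp)+
    ultimately show "Agood (- (- g 0 - g t)) B i" "Bgood (- (- g 0 - g t)) B i"
      unfolding Agood_def Bgood_def B_def c_def d_def chA_def chB_def by auto
  qed
  have mem: "uvec g n (- g 0 - g t) B \<in> Vset g n" using S unfolding Vset_def by blast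
  show ?thesis using val[unfolded eq] mem by blast
qed

lemma S3_val:
  assumes t: "1 \<le> t" "t + 1 \<le> n" and ex: "\<exists>i<n. chA i" "\<exists>j<n. \<not> chA j"
  shows "\<exists>v\<in>Vset g n. dotv n v (pvec n q) = T (d t)"
proof -
  define B where "B i dd z = (if dd = 0 then (if z = 0 then chA i else \<not> chA i)
      else (if i \<le> t then True else (if z = 0 then chB i else \<not> chB i)))" for i dd z :: nat
  have S: "S3 n t B" using t ex unfolding S3_def B_def by auto
  have eq: "- (- g t - g (n - 1)) = d t" unfolding d_def by simp
  have val: "dotv n (uvec g n (- g t - g (n - 1)) B) (pvec n q) = T (- (- g t - g (n - 1)))"
  proof (rule value_eq)
    fix i assume i: "i < n"
    have "g 0 \<le> g t" "g i \<le> g (n - 1)" using i t by (intro gle; simp)+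
    moreover have "i \<le> t \<Longrightarrow> g i \<le> g t" "t < i \<Longrightarrow> g t \<le> g i" using i t by (intro gle; simp)+
    ultimately show "Agood (- (- g t - g (n - 1))) B i" "Bgood (- (- g t - g (n - 1))) B i"
      unfolding Agood_def Bgood_def B_def c_def d_def chA_def chB_def by auto
  qed
  have mem: "uvec g n (- g t - g (n - 1)) B \<in> Vset g n" using S unfolding Vset_def by blast
  show ?thesis using val[unfolded eq] mem by blast
qed

definition Lam where "Lam = c ` {..<n} \<union> d ` {..<n}"

lemma cand: assumes "l \<in> Lam" shows "\<exists>v\<in>Vset g n. T l \<le> dotv n v (pvec n q)"
proof -
  obtain v2 where v2: "v2 \<in> Vset g n" "dotv n v2 (pvec n q) = T (c (n - 1))" using S2_val by blast
  from assms consider (C) t where "t < n" "l = c t" | (D) t where "t < n" "l = d t"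
    unfolding Lam_def by blast
  then show ?thesis
  proof cases
    case C
    show ?thesis
    proof (cases "t = n - 1")
      case True then show ?thesis using C by (intro bexI[OF _ v2(1)]) (simp add: v2(2))
    next
      case False
      then have t2: "t + 2 \<le> n" using C by auto
      show ?thesis
      proof (cases "(\<exists>i<n. chB i) \<and> (\<exists>j<n. \<not> chB j)")
        case True
        then obtain v where "v \<in> Vset g n" "dotv n v (pvec n q) = T (c t)" using S1_val[OF t2] by blast
        then show ?thesis using C by (intro bexI[of _ v]) simp_all
      next
        case False
        then have all: "(\<forall>i<n. y1 i \<le> y0 i) \<or> (\<forall>i<n. \<not> y1 i \<le> y0 i)" unfolding chB_def by auto
        have "g t \<le> g (n - 1)" using C by (intro gle) auto
        then have "l \<le> c (n - 1)" using C unfolding c_def by simp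
        then show ?thesis using E1[OF all] by (intro bexI[OF _ v2(1)]) (simp add: v2(2))
      qed
    qed
  next
    case D
    show ?thesis
    proof (cases "t = 0")
      case True
      then have "l = c (n - 1)" using D unfolding c_def d_def by simp
      then show ?thesis by (intro bexI[OF _ v2(1)]) (simp add: v2(2))
    next
      case False
      then have t1: "1 \<le> t" "t + 1 \<le> n" using D by auto
      show ?thesis
      proof (cases "(\<exists>i<n. chA i) \<and> (\<exists>j<n. \<not> chA j)")
        case True
        then obtain v where "v \<in> Vset g n" "dotv n v (pvec n q) = T (d t)" using S3_val[OF t1] by blast
        then show ?thesis using D by (intro bexI[of _ v]) simp_all
      next
        case False
        then have all: "(\<forall>i<n. x1 i \<le> x0 i) \<or> (\<forall>i<n. \<not> x1 i \<le> x0 i)" unfolding chA_def by auto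
        have "g 0 \<le> g t" using D by (intro gle) auto
        then have "c (n - 1) \<le> l" using D unfolding c_def d_def by simp
        then show ?thesis using E2[OF all] by (intro bexI[OF _ v2(1)]) (simp add: v2(2))
      qed
    qed
  qed
qed

end

lemma prod_sum1:
  fixes u v :: "nat \<Rightarrow> real"
  assumes u: "\<And>i. i < n \<Longrightarrow> 0 \<le> u i" and v: "\<And>i. i < n \<Longrightarrow> 0 \<le> v i"
    and su: "(\<Sum>i<n. u i) = R" and sv: "(\<Sum>i<n. v i) = R" and a: "a < n"
  shows "(\<Sum>b<n. u a * v b / R) = u a"
proof (cases "R = 0")
  case True
  have "\<forall>i\<in>{..<n}. u i = 0" using sum_nonneg_eq_0_iff[of "{..<n}" u] su True u by auto
  then have "u a = 0" using a by simp
  then show ?thesis by simp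
next
  case False
  have "(\<Sum>b<n. u a * v b / R) = u a * (\<Sum>b<n. v b) / R" by (simp add: sum_distrib_left sum_divide_distrib)
  then show ?thesis using sv False by simp
qed

lemma prod_sum2:
  fixes u v :: "nat \<Rightarrow> real"
  assumes u: "\<And>i. i < n \<Longrightarrow> 0 \<le> u i" and v: "\<And>i. i < n \<Longrightarrow> 0 \<le> v i"
    and su: "(\<Sum>i<n. u i) = R" and sv: "(\<Sum>i<n. v i) = R" and b: "b < n"
  shows "(\<Sum>a<n. u a * v b / R) = v b"
  using prod_sum1[of n v u R b] assms by (simp add: mult.commute)

lemma prod_sum_ate:
  fixes u v g :: "nat \<Rightarrow> real"
  assumes u: "\<And>i. i < n \<Longrightarrow> 0 \<le> u i" and v: "\<And>i. i < n \<Longrightarrow> 0 \<le> v i"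
    and su: "(\<Sum>i<n. u i) = R" and sv: "(\<Sum>i<n. v i) = R"
  shows "(\<Sum>a<n. \<Sum>b<n. (u a * v b / R) * (g b - g a)) = (\<Sum>b<n. g b * v b) - (\<Sum>a<n. g a * u a)"
proof -
  have "(\<Sum>a<n. \<Sum>b<n. (u a * v b / R) * (g b - g a)) =
        (\<Sum>a<n. \<Sum>b<n. g b * (u a * v b / R)) - (\<Sum>a<n. g a * (\<Sum>b<n. u a * v b / R))"
    by (simp add: sum_subtractf[symmetric] sum_distrib_left algebra_simps diff_divide_distrib)
  also have "(\<Sum>a<n. \<Sum>b<n. g b * (u a * v b / R)) = (\<Sum>b<n. g b * (\<Sum>a<n. u a * v b / R))"
    by (subst sum.swap) (simp add: sum_distrib_left)
  also have "\<dots> = (\<Sum>b<n. g b * v b)"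
    by (intro sum.cong refl) (simp add: prod_sum2[OF u v su sv])
  also have "(\<Sum>a<n. g a * (\<Sum>b<n. u a * v b / R)) = (\<Sum>a<n. g a * u a)"
    by (intro sum.cong refl) (simp add: prod_sum1[OF u v su sv])
  finally show ?thesis .
qed

locale prim = vl +
  fixes f e :: "nat \<Rightarrow> real"
  assumes f_nn: "\<And>i. i < n \<Longrightarrow> 0 \<le> f i" and f_le: "\<And>i. i < n \<Longrightarrow> f i \<le> m i"
    and e_nn: "\<And>i. i < n \<Longrightarrow> 0 \<le> e i" and e_le: "\<And>i. i < n \<Longrightarrow> e i \<le> k i"
    and bal: "(\<Sum>i<n. f i) - (\<Sum>i<n. e i) = (\<Sum>i<n. x0 i) - (\<Sum>i<n. y1 i)"
begin

definition uA where "uA a = x0 a - f a"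
definition vA where "vA b = y1 b - e b"
definition uB where "uB a = x1 a - f a"
definition vB where "vB b = y0 b - e b"
definition R1 where "R1 = (\<Sum>i<n. uA i)"
definition R2 where "R2 = (\<Sum>i<n. vB i)"

lemma uA_nn: "i < n \<Longrightarrow> 0 \<le> uA i" unfolding uA_def using f_le[of i] by (simp add: m_def)
lemma uB_nn: "i < n \<Longrightarrow> 0 \<le> uB i" unfolding uB_def using f_le[of i] by (simp add: m_def)
lemma vA_nn: "i < n \<Longrightarrow> 0 \<le> vA i" unfolding vA_def using e_le[of i] by (simp add: k_def)
lemma vB_nn: "i < n \<Longrightarrow> 0 \<le> vB i" unfolding vB_def using e_le[of i] by (simp add: k_def)

lemma sumR1: "(\<Sum>i<n. vA i) = R1"
  unfolding R1_def uA_def vA_def using bal by (simp add: sum_subtractf)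

lemma sumR2: "(\<Sum>i<n. uB i) = R2"
proof -
  have "(\<Sum>i<n. x1 i) = 1 - (\<Sum>i<n. y1 i)" "(\<Sum>i<n. y0 i) = 1 - (\<Sum>i<n. x0 i)"
    using mass0 mass1 by (simp_all add: sum.distrib)
  then show ?thesis unfolding R2_def uB_def vB_def using bal by (simp add: sum_subtractf)
qed

definition A where "A a b = uA a * vA b / R1"
definition Bc where "Bc a b = uB a * vB b / R2"

lemma R1_nn: "0 \<le> R1" unfolding R1_def by (intro sum_nonneg) (simp add: uA_nn)
lemma R2_nn: "0 \<le> R2" unfolding R2_def by (intro sum_nonneg) (simp add: vB_nn)

lemma A_nn: "a < n \<Longrightarrow> b < n \<Longrightarrow> 0 \<le> A a b"
  unfolding A_def using uA_nn vA_nn R1_nn by simp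
lemma Bc_nn: "a < n \<Longrightarrow> b < n \<Longrightarrow> 0 \<le> Bc a b"
  unfolding Bc_def using uB_nn vB_nn R2_nn by simp

lemma sumA_b: "a < n \<Longrightarrow> (\<Sum>b<n. A a b) = uA a"
  unfolding A_def by (rule prod_sum1[OF uA_nn vA_nn R1_def[symmetric] sumR1])
lemma sumA_a: "b < n \<Longrightarrow> (\<Sum>a<n. A a b) = vA b"
  unfolding A_def by (rule prod_sum2[OF uA_nn vA_nn R1_def[symmetric] sumR1])
lemma sumB_b: "a < n \<Longrightarrow> (\<Sum>b<n. Bc a b) = uB a"
  unfolding Bc_def by (rule prod_sum1[OF uB_nn vB_nn sumR2 R2_def[symmetric]])
lemma sumB_a: "b < n \<Longrightarrow> (\<Sum>a<n. Bc a b) = vB b"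
  unfolding Bc_def by (rule prod_sum2[OF uB_nn vB_nn sumR2 R2_def[symmetric]])

lemma ateA: "(\<Sum>a<n. \<Sum>b<n. A a b * (g b - g a)) = (\<Sum>b<n. g b * vA b) - (\<Sum>a<n. g a * uA a)"
  unfolding A_def by (rule prod_sum_ate[OF uA_nn vA_nn R1_def[symmetric] sumR1])
lemma ateB: "(\<Sum>a<n. \<Sum>b<n. Bc a b * (g b - g a)) = (\<Sum>b<n. g b * vB b) - (\<Sum>a<n. g a * uB a)"
  unfolding Bc_def by (rule prod_sum_ate[OF uB_nn vB_nn sumR2 R2_def[symmetric]])

definition core :: "nat \<Rightarrow> nat \<Rightarrow> nat \<Rightarrow> nat \<Rightarrow> real" where "core a b dd z = (if dd = 0 then (if b = 0 then f a else 0) + (if z = 0 then A a b else Bc a b)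
    else (if a = n - 1 then e b else 0) + (if z = 0 then Bc a b else A a b))"

definition qs :: "nat \<Rightarrow> nat \<Rightarrow> nat \<Rightarrow> nat \<Rightarrow> real" where "qs a b dd z = (if a < n \<and> b < n \<and> dd < 2 \<and> z < 2 then P z * core a b dd z else 0)"

definition pis where "pis a b = (if b = 0 then f a else 0) + (if a = n - 1 then e b else 0) + A a b + Bc a b"

lemma core_sum: "core a b 0 z + core a b (Suc 0) z = pis a b"
  unfolding core_def pis_def by auto

lemma delta_b: "a < n \<Longrightarrow> (\<Sum>b<n. if b = 0 then f a else 0) = f a" using n_pos by simp
lemma delta_a: "b < n \<Longrightarrow> (\<Sum>a<n. if a = n - 1 then e b else 0) = e b" using n_pos by simp

lemma obs_q: "z < 2 \<Longrightarrow> obs n q y dd z = P z * pvec n q y dd z"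
  unfolding pvec_def using Ppos[of z] unfolding P_def by simp

lemma obs_qs:
  assumes y: "y < n" and dd: "dd < 2" and z: "z < 2"
  shows "obs n qs y dd z = obs n q y dd z"
proof -
  have P: "0 < P z" using Ppos z by simp
  consider "dd = 0" | "dd = 1" using dd by linarith
  then show ?thesis
  proof cases
    case 1
    have "obs n qs y 0 z = (\<Sum>b<n. qs y b 0 z)" by (rule obs0[OF y])
    also have "\<dots> = P z * (\<Sum>b<n. core y b 0 z)"
      by (simp add: sum_distrib_left qs_def y z)
    also have "(\<Sum>b<n. core y b 0 z) = f y + (if z = 0 then uA y else uB y)"
      unfolding core_def using y by (simp add: sum.distrib delta_b sumA_b sumB_b)
    also have "f y + (if z = 0 then uA y else uB y) = pvec n q y 0 z"
      using z unfolding uA_def uB_def x0_def x1_def by (cases z) auto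
    finally show ?thesis using obs_q[OF z] 1 by simp
  next
    case 2
    have "obs n qs y 1 z = (\<Sum>a<n. qs a y 1 z)" by (rule obs1[OF y])
    also have "\<dots> = P z * (\<Sum>a<n. core a y 1 z)"
      by (simp add: sum_distrib_left qs_def y z)
    also have "(\<Sum>a<n. core a y 1 z) = e y + (if z = 0 then vB y else vA y)"
      unfolding core_def using y by (simp add: sum.distrib delta_a sumA_a sumB_a)
    also have "e y + (if z = 0 then vB y else vA y) = pvec n q y 1 z"
      using z unfolding vA_def vB_def y0_def y1_def by (cases z) auto
    finally show ?thesis using obs_q[OF z] 2 by simp
  qed
qed

end

context prim begin

lemma core_b0: "a < n \<Longrightarrow> (\<Sum>b<n. core a b 0 z) = f a + (if z = 0 then uA a else uB a)"
  unfolding core_def by (simp add: sum.distrib delta_b sumA_b sumB_b)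
lemma core_a1: "b < n \<Longrightarrow> (\<Sum>a<n. core a b (Suc 0) z) = e b + (if z = 0 then vB b else vA b)"
  unfolding core_def by (simp add: sum.distrib delta_a sumA_a sumB_a)

lemma pis_total: "(\<Sum>a<n. \<Sum>b<n. pis a b) = 1"
proof -
  have sw: "(\<Sum>a<n. \<Sum>b<n. core a b (Suc 0) 0) = (\<Sum>b<n. \<Sum>a<n. core a b (Suc 0) 0)"
    by (rule sum.swap)
  have "(\<Sum>a<n. \<Sum>b<n. pis a b) = (\<Sum>a<n. \<Sum>b<n. core a b 0 0 + core a b (Suc 0) 0)"
    by (simp add: core_sum)
  also have "\<dots> = (\<Sum>a<n. \<Sum>b<n. core a b 0 0) + (\<Sum>b<n. \<Sum>a<n. core a b (Suc 0) 0)"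
    by (simp add: sum.distrib sw)
  also have "\<dots> = (\<Sum>a<n. f a + uA a) + (\<Sum>b<n. e b + vB b)"
    by (simp add: core_b0 core_a1)
  also have "\<dots> = (\<Sum>i<n. x0 i + y0 i)" unfolding uA_def vB_def by (simp add: sum.distrib)
  finally show ?thesis using mass0 by simp
qed

lemma pis_nn: "a < n \<Longrightarrow> b < n \<Longrightarrow> 0 \<le> pis a b"
  unfolding pis_def using f_nn e_nn A_nn Bc_nn by (simp add: add_nonneg_nonneg)

lemma core_nn: "a < n \<Longrightarrow> b < n \<Longrightarrow> 0 \<le> core a b dd z"
  unfolding core_def using f_nn e_nn A_nn Bc_nn by (simp add: add_nonneg_nonneg)

lemma qs_sumd: "a < n \<Longrightarrow> b < n \<Longrightarrow> z < 2 \<Longrightarrow> (\<Sum>dd<2. qs a b dd z) = P z * pis a b"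
proof -
  assume ab: "a < n" "b < n" "z < 2"
  have "(\<Sum>dd<2. qs a b dd z) = P z * (core a b 0 z + core a b (Suc 0) z)"
    using ab by (simp add: sum2 qs_def algebra_simps)
  then show ?thesis by (simp only: core_sum)
qed

lemma qs_pair: "a < n \<Longrightarrow> b < n \<Longrightarrow> qs a b 0 0 + qs a b (Suc 0) 0 = P 0 * pis a b"
   "a < n \<Longrightarrow> b < n \<Longrightarrow> qs a b 0 (Suc 0) + qs a b (Suc 0) (Suc 0) = P (Suc 0) * pis a b"
  using qs_sumd[of a b 0] qs_sumd[of a b 1] by (simp_all add: sum2)

lemma PZ_qs: "z < 2 \<Longrightarrow> PZ n qs z = P z"
proof -
  assume z: "z < 2"
  have "PZ n qs z = (\<Sum>a<n. \<Sum>b<n. P z * pis a b)"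
    unfolding PZ_def by (intro sum.cong refl) (simp add: qs_sumd z)
  also have "\<dots> = P z" by (simp add: sum_distrib_left[symmetric] pis_total)
  finally show ?thesis .
qed

lemma PY_qs: "a < n \<Longrightarrow> b < n \<Longrightarrow> PY01 n qs a b = pis a b"
proof -
  assume ab: "a < n" "b < n"
  have "PY01 n qs a b = (\<Sum>z<2. \<Sum>dd<2. qs a b dd z)" unfolding PY01_def by (rule sum.swap)
  also have "\<dots> = (\<Sum>z<2. P z * pis a b)" using ab by (intro sum.cong refl) (simp add: qs_sumd)
  also have "\<dots> = (P 0 + P 1) * pis a b" by (simp add: sum2 algebra_simps)
  finally show ?thesis using Psum by simp
qed

lemma valid_qs: "valid_law n qs"
  unfolding valid_law_def
proof (intro conjI allI impI)
  fix a b dd z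
  show "0 \<le> qs a b dd z" unfolding qs_def using Ppos[of z] core_nn[of a b dd z]
    by (auto intro!: mult_nonneg_nonneg)
  show "n \<le> a \<or> n \<le> b \<or> 2 \<le> dd \<or> 2 \<le> z \<Longrightarrow> qs a b dd z = 0" unfolding qs_def by auto
next
  have "(\<Sum>a<n. \<Sum>b<n. \<Sum>dd<2. \<Sum>z<2. qs a b dd z) = (\<Sum>z<2. PZ n qs z)"
    unfolding PZ_def by (simp add: sum.swap[of _ "{..<2::nat}"] sum2 sum.distrib)
  also have "\<dots> = 1" using PZ_qs[of 0] PZ_qs[of 1] Psum by (simp add: sum2)
  finally show "(\<Sum>a<n. \<Sum>b<n. \<Sum>dd<2. \<Sum>z<2. qs a b dd z) = 1" .
next
  fix z :: nat assume "z < 2" then show "0 < PZ n qs z" using PZ_qs Ppos by simp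
next
  fix a b z :: nat assume "a < n" "b < n" "z < 2"
  then show "(\<Sum>dd<2. qs a b dd z) = PY01 n qs a b * PZ n qs z"
    by (simp add: qs_sumd PY_qs PZ_qs)
qed

lemma ATE_qs: "ATE g n qs = (\<Sum>i<n. f i * (g 0 - g i) + e i * (g i - g (n - 1)))
   + ((\<Sum>b<n. g b * vA b) - (\<Sum>a<n. g a * uA a)) + ((\<Sum>b<n. g b * vB b) - (\<Sum>a<n. g a * uB a))"
proof -
  have "ATE g n qs = (\<Sum>a<n. \<Sum>b<n. pis a b * (g b - g a))"
  proof -
    have "ATE g n qs = (\<Sum>a<n. \<Sum>b<n. (P 0 + P 1) * pis a b * (g b - g a))"
      unfolding ATE_def
    proof (intro sum.cong refl)
      fix a b assume ab: "a \<in> {..<n}" "b \<in> {..<n}"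
      have "(\<Sum>dd<2. \<Sum>z<2. qs a b dd z * (g b - g a)) =
         ((qs a b 0 0 + qs a b (Suc 0) 0) + (qs a b 0 (Suc 0) + qs a b (Suc 0) (Suc 0))) * (g b - g a)"
        by (simp add: sum2 algebra_simps)
      also have "\<dots> = (P 0 * pis a b + P (Suc 0) * pis a b) * (g b - g a)"
        using ab by (simp only: qs_pair lessThan_iff)
      finally show "(\<Sum>dd<2. \<Sum>z<2. qs a b dd z * (g b - g a)) = (P 0 + P 1) * pis a b * (g b - g a)"
        by (simp add: algebra_simps)
    qed
    then show ?thesis using Psum by simp
  qed
  also have "\<dots> = (\<Sum>a<n. \<Sum>b<n. (if b = 0 then f a else 0) * (g b - g a))
      + (\<Sum>a<n. \<Sum>b<n. (if a = n - 1 then e b else 0) * (g b - g a))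
      + (\<Sum>a<n. \<Sum>b<n. A a b * (g b - g a)) + (\<Sum>a<n. \<Sum>b<n. Bc a b * (g b - g a))"
    unfolding pis_def by (simp only: distrib_right sum.distrib)
  also have "(\<Sum>a<n. \<Sum>b<n. (if b = 0 then f a else 0) * (g b - g a)) = (\<Sum>i<n. f i * (g 0 - g i))"
    using n_pos by (simp add: if_distrib[of "\<lambda>x. x * _"] cong: if_cong)
  also have "(\<Sum>a<n. \<Sum>b<n. (if a = n - 1 then e b else 0) * (g b - g a)) = (\<Sum>i<n. e i * (g i - g (n - 1)))"
    using n_pos by (subst sum.swap) (simp add: if_distrib[of "\<lambda>x. x * _"] cong: if_cong)
  finally show ?thesis by (simp add: ateA ateB sum.distrib)
qed

end

lemma sum_min_le: fixes u v :: "nat \<Rightarrow> real"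
  shows "(\<Sum>i<n. min (u i) (v i)) \<le> min (\<Sum>i<n. u i) (\<Sum>i<n. v i)"
  by (simp add: sum_mono)

context vl begin

lemma x0s: "a < n \<Longrightarrow> x0 a = (\<Sum>b<n. s a b 0)" unfolding x0_def by (simp add: pvec0)
lemma x1s: "a < n \<Longrightarrow> x1 a = (\<Sum>b<n. s a b 1)" unfolding x1_def by (simp add: pvec0)
lemma y0s: "b < n \<Longrightarrow> y0 b = (\<Sum>a<n. w a b 0)" unfolding y0_def by (simp add: pvec1s)
lemma y1s: "b < n \<Longrightarrow> y1 b = (\<Sum>a<n. w a b 1)" unfolding y1_def by (simp add: pvec1s)

lemma feas1: "(\<Sum>i<n. x0 i) - (\<Sum>i<n. y1 i) \<le> (\<Sum>i<n. m i)"
proof -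
  have "(\<Sum>i<n. x0 i) - (\<Sum>i<n. y1 i) = (\<Sum>a<n. \<Sum>b<n. s a b 0) - (\<Sum>b<n. \<Sum>a<n. w a b 1)"
    by (simp add: x0s y1s)
  also have "\<dots> = (\<Sum>a<n. \<Sum>b<n. s a b 0 - w a b 1)"
    by (subst (2) sum.swap) (simp add: sum_subtractf)
  also have "\<dots> \<le> (\<Sum>a<n. \<Sum>b<n. min (s a b 0) (s a b 1))"
  proof (intro sum_mono)
    fix a b assume "a \<in> {..<n}" "b \<in> {..<n}"
    then have "s a b 0 + w a b 0 = pi a b" "s a b 1 + w a b 1 = pi a b" using sw by auto
    then show "s a b 0 - w a b 1 \<le> min (s a b 0) (s a b 1)" using w_nonneg[of a b 0] w_nonneg[of a b 1] by simp
  qed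
  also have "\<dots> \<le> (\<Sum>a<n. m a)"
  proof (intro sum_mono)
    fix a assume "a \<in> {..<n}"
    then show "(\<Sum>b<n. min (s a b 0) (s a b 1)) \<le> m a"
      unfolding m_def using sum_min_le[of "\<lambda>b. s a b 0" "\<lambda>b. s a b 1" n] by (simp add: x0s x1s)
  qed
  finally show ?thesis .
qed

lemma feas2: "(\<Sum>i<n. y1 i) - (\<Sum>i<n. x0 i) \<le> (\<Sum>i<n. k i)"
proof -
  have "(\<Sum>i<n. y1 i) - (\<Sum>i<n. x0 i) = (\<Sum>b<n. \<Sum>a<n. w a b 1) - (\<Sum>b<n. \<Sum>a<n. s a b 0)"
    by (simp add: x0s y1s) (subst sum.swap, simp)
  also have "\<dots> = (\<Sum>b<n. \<Sum>a<n. w a b 1 - s a b 0)"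
    by (simp add: sum_subtractf)
  also have "\<dots> \<le> (\<Sum>b<n. \<Sum>a<n. min (w a b 0) (w a b 1))"
  proof (intro sum_mono)
    fix a b assume "b \<in> {..<n}" "a \<in> {..<n}"
    then have "s a b 0 + w a b 0 = pi a b" "s a b 1 + w a b 1 = pi a b" using sw by auto
    then show "w a b 1 - s a b 0 \<le> min (w a b 0) (w a b 1)" using s_nonneg[of a b 0] s_nonneg[of a b 1] by simp
  qed
  also have "\<dots> \<le> (\<Sum>b<n. k b)"
  proof (intro sum_mono)
    fix b assume "b \<in> {..<n}"
    then show "(\<Sum>a<n. min (w a b 0) (w a b 1)) \<le> k b"
      unfolding k_def using sum_min_le[of "\<lambda>a. w a b 0" "\<lambda>a. w a b 1" n] by (simp add: y0s y1s)
  qed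
  finally show ?thesis .
qed

definition Dl where "Dl = (\<Sum>i<n. x0 i) - (\<Sum>i<n. y1 i)"
definition hfun where "hfun l = Dl - (\<Sum>i<n. if c i \<le> l then m i else 0) + (\<Sum>i<n. if l < d i then k i else 0)"

lemma Lam_finite: "finite Lam" unfolding Lam_def by simp

lemma sel: "\<exists>l\<in>Lam. hfun l \<le> 0 \<and> 0 \<le> Dl - (\<Sum>i<n. if c i < l then m i else 0) + (\<Sum>i<n. if l \<le> d i then k i else 0)"
proof -
  define Lp where "Lp = {l \<in> Lam. hfun l \<le> 0}"
  have top: "d (n - 1) \<in> Lp"
  proof -
    have cd: "c i \<le> d (n - 1)" "\<not> d (n - 1) < d i" if "i < n" for i
    proof -
      have "g i \<le> g (n - 1)" "g 0 \<le> g (n - 1)" using that by (intro gle; simp)+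
      then show "c i \<le> d (n - 1)" "\<not> d (n - 1) < d i" unfolding c_def d_def by auto
    qed
    have s1: "(\<Sum>i<n. if c i \<le> d (n - 1) then m i else 0) = (\<Sum>i<n. m i)"
      by (intro sum.cong refl) (use cd in auto)
    have s2: "(\<Sum>i<n. if d (n - 1) < d i then k i else 0) = 0"
      by (intro sum.neutral) (use cd in auto)
    have "hfun (d (n - 1)) = Dl - (\<Sum>i<n. m i)"
      unfolding hfun_def s1 s2 by simp
    then have "hfun (d (n - 1)) \<le> 0" using feas1 unfolding Dl_def by simp
    moreover have "d (n - 1) \<in> Lam" unfolding Lam_def using n_pos by simp
    ultimately show ?thesis unfolding Lp_def by simp
  qed
  have finLp: "finite Lp" unfolding Lp_def using Lam_finite by simp
  define ls where "ls = Min Lp"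
  have ls_in: "ls \<in> Lp" unfolding ls_def using finLp top by (intro Min_in) auto
  have ls_min: "\<And>l. l \<in> Lp \<Longrightarrow> ls \<le> l" unfolding ls_def using finLp by simp
  define L where "L = {l \<in> Lam. l < ls}"
  have cLam: "c i \<in> Lam" "d i \<in> Lam" if "i < n" for i unfolding Lam_def using that by auto
  have H2: "0 \<le> Dl - (\<Sum>i<n. if c i < ls then m i else 0) + (\<Sum>i<n. if ls \<le> d i then k i else 0)"
  proof (cases "L = {}")
    case True
    then have cd: "\<not> c i < ls" "ls \<le> d i" if "i < n" for i
      using cLam[OF that] unfolding L_def by auto
    have s1: "(\<Sum>i<n. if c i < ls then m i else 0) = 0"
      by (intro sum.neutral) (use cd in auto)
    have s2: "(\<Sum>i<n. if ls \<le> d i then k i else 0) = (\<Sum>i<n. k i)"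
      by (intro sum.cong refl) (use cd in auto)
    have "Dl - (\<Sum>i<n. if c i < ls then m i else 0) + (\<Sum>i<n. if ls \<le> d i then k i else 0) = Dl + (\<Sum>i<n. k i)"
      unfolding s1 s2 by simp
    then show ?thesis using feas2 unfolding Dl_def by simp
  next
    case False
    have finL: "finite L" unfolding L_def using Lam_finite by simp
    define lp where "lp = Max L"
    have lp_in: "lp \<in> L" unfolding lp_def using finL False by (intro Max_in) auto
    have lp_max: "\<And>l. l \<in> L \<Longrightarrow> l \<le> lp" unfolding lp_def using finL by simp
    have "lp \<notin> Lp" using lp_in ls_min unfolding L_def by force
    then have hp: "0 < hfun lp" using lp_in unfolding L_def Lp_def by auto
    have e1: "(c i \<le> lp) = (c i < ls)" if "i < n" for i
      using lp_max[of "c i"] cLam[OF that] lp_in unfolding L_def by force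
    have e2: "(lp < d i) = (ls \<le> d i)" if "i < n" for i
      using lp_max[of "d i"] cLam[OF that] lp_in unfolding L_def by force
    have s1: "(\<Sum>i<n. if c i \<le> lp then m i else 0) = (\<Sum>i<n. if c i < ls then m i else 0)"
      by (intro sum.cong refl) (use e1 in auto)
    have s2: "(\<Sum>i<n. if lp < d i then k i else 0) = (\<Sum>i<n. if ls \<le> d i then k i else 0)"
      by (intro sum.cong refl) (use e2 in auto)
    have "hfun lp = Dl - (\<Sum>i<n. if c i < ls then m i else 0) + (\<Sum>i<n. if ls \<le> d i then k i else 0)"
      unfolding hfun_def s1 s2 by simp
    then show ?thesis using hp by simp
  qed
  show ?thesis using ls_in H2 unfolding Lp_def by blast
qed

end

context vl begin

lemma m_nn: "0 \<le> m i" unfolding m_def using x0n x1n by simp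
lemma k_nn: "0 \<le> k i" unfolding k_def using y0n y1n by simp

lemma construct:
  assumes lL: "l \<in> Lam" and H1: "hfun l \<le> 0"
    and H2: "0 \<le> Dl - (\<Sum>i<n. if c i < l then m i else 0) + (\<Sum>i<n. if l \<le> d i then k i else 0)"
  shows "\<exists>q'. valid_law n q' \<and> (\<forall>y<n. \<forall>dd<2. \<forall>z<2. obs n q' y dd z = obs n q y dd z) \<and> ATE g n q' = T l"
proof -
  define FL where "FL = (\<Sum>i<n. if c i < l then m i else 0)"
  define T1 where "T1 = (\<Sum>i<n. if c i = l then m i else 0)"
  define EL where "EL = (\<Sum>i<n. if l < d i then k i else 0)"
  define T2 where "T2 = (\<Sum>i<n. if d i = l then k i else 0)"
  have s1: "(\<Sum>i<n. if c i \<le> l then m i else 0) = FL + T1"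
    unfolding FL_def T1_def by (subst sum.distrib[symmetric]) (intro sum.cong refl, auto)
  have s2: "(\<Sum>i<n. if l \<le> d i then k i else 0) = EL + T2"
    unfolding EL_def T2_def by (subst sum.distrib[symmetric]) (intro sum.cong refl, auto)
  define r where "r = Dl - FL + EL"
  have r1: "r \<le> T1" using H1 unfolding hfun_def s1 r_def EL_def by simp
  have r2: "- T2 \<le> r" using H2 unfolding s2 r_def FL_def by simp
  define th where "th = (if 0 < r then r / T1 else 0)"
  define ph where "ph = (if r < 0 then - r / T2 else 0)"
  have th: "0 \<le> th" "th \<le> 1" "th * T1 = max r 0" using r1 unfolding th_def by auto
  have ph_all: "0 \<le> ph \<and> ph \<le> 1 \<and> ph * T2 = max (- r) 0"
  proof (cases "r < 0")
    case True
    then have T2p: "0 < T2" using r2 by simp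
    have "-1 \<le> r / T2" using T2p r2 by (simp add: le_divide_eq)
    moreover have "r / T2 \<le> 0" using T2p True by (simp add: divide_le_0_iff)
    ultimately show ?thesis unfolding ph_def using True T2p by auto
  qed (auto simp: ph_def)
  then have ph: "0 \<le> ph" "ph \<le> 1" "ph * T2 = max (- r) 0" by auto
  define f where "f i = (if c i < l then m i else if c i = l then th * m i else 0)" for i
  define e where "e i = (if l < d i then k i else if d i = l then ph * k i else 0)" for i
  have sf: "(\<Sum>i<n. f i) = FL + th * T1"
  proof -
    have "(\<Sum>i<n. f i) = (\<Sum>i<n. (if c i < l then m i else 0) + th * (if c i = l then m i else 0))"
      unfolding f_def by (intro sum.cong refl) auto
    then show ?thesis unfolding FL_def T1_def by (simp add: sum.distrib sum_distrib_left)
  qed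
  have se: "(\<Sum>i<n. e i) = EL + ph * T2"
  proof -
    have "(\<Sum>i<n. e i) = (\<Sum>i<n. (if l < d i then k i else 0) + ph * (if d i = l then k i else 0))"
      unfolding e_def by (intro sum.cong refl) auto
    then show ?thesis unfolding EL_def T2_def by (simp add: sum.distrib sum_distrib_left)
  qed
  have balance: "(\<Sum>i<n. f i) - (\<Sum>i<n. e i) = (\<Sum>i<n. x0 i) - (\<Sum>i<n. y1 i)"
    unfolding sf se th(3) ph(3) using r_def unfolding Dl_def by (simp add: max_def)
  have fb: "0 \<le> f i" "f i \<le> m i" for i
    unfolding f_def using th m_nn[of i] mult_left_le_one_le[of "m i" th] by auto
  have eb: "0 \<le> e i" "e i \<le> k i" for i
    unfolding e_def using ph k_nn[of i] mult_left_le_one_le[of "k i" ph] by auto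
  interpret PR: prim g n q f e
    by unfold_locales (use fb eb balance in auto)
  have pt: "f i * (g 0 - g i) + e i * (g i - g (n - 1)) + g i * (y1 i - e i) - g i * (x0 i - f i)
        + g i * (y0 i - e i) - g i * (x1 i - f i) = tau l i + l * (f i - e i - x0 i + y1 i)" for i
  proof -
    have A: "c i * f i + m i * pos (l - c i) = l * f i"
      unfolding f_def by (auto simp: pos0 pos1 algebra_simps)
    have B: "d i * e i - k i * pos (d i - l) = l * e i"
      unfolding e_def by (auto simp: pos0 pos1 algebra_simps)
    show ?thesis using A B unfolding tau_def c_def d_def by (simp add: algebra_simps)
  qed
  have "ATE g n PR.qs = (\<Sum>i<n. f i * (g 0 - g i) + e i * (g i - g (n - 1)) + g i * (y1 i - e i) - g i * (x0 i - f i)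
        + g i * (y0 i - e i) - g i * (x1 i - f i))"
    unfolding PR.ATE_qs PR.uA_def PR.vA_def PR.uB_def PR.vB_def by (simp add: sum.distrib sum_subtractf)
  also have "\<dots> = T l + l * ((\<Sum>i<n. f i) - (\<Sum>i<n. e i) - (\<Sum>i<n. x0 i) + (\<Sum>i<n. y1 i))"
  proof -
    have "(\<Sum>i<n. l * (f i - e i - x0 i + y1 i)) = l * (\<Sum>i<n. f i - e i - x0 i + y1 i)"
      by (simp add: sum_distrib_left)
    also have "(\<Sum>i<n. f i - e i - x0 i + y1 i) = (\<Sum>i<n. f i) - (\<Sum>i<n. e i) - (\<Sum>i<n. x0 i) + (\<Sum>i<n. y1 i)"
      by (simp add: sum.distrib sum_subtractf)
    finally show ?thesis unfolding pt T_def by (simp add: sum.distrib)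
  qed
  also have "\<dots> = T l" using balance by simp
  finally have at: "ATE g n PR.qs = T l" .
  have obsall: "\<forall>y<n. \<forall>dd<2. \<forall>z<2. obs n PR.qs y dd z = obs n q y dd z"
    using PR.obs_qs by simp
  show ?thesis by (rule exI[of _ PR.qs], intro conjI, rule PR.valid_qs, rule obsall, rule at)
qed

end

lemma obs1s: "y < n \<Longrightarrow> obs n q y (Suc 0) z = (\<Sum>a<n. q a y (Suc 0) z)"
  using obs1[of y n q z] by simp

lemma PZ_obs: "PZ n q z = (\<Sum>y<n. obs n q y 0 z + obs n q y 1 z)"
proof -
  have "(\<Sum>y<n. obs n q y 0 z + obs n q y 1 z) = (\<Sum>y<n. (\<Sum>b<n. q y b 0 z) + (\<Sum>a<n. q a y 1 z))"
    by (intro sum.cong refl) (simp add: obs0 obs1s)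
  also have "\<dots> = (\<Sum>a<n. \<Sum>b<n. q a b 0 z + q a b 1 z)"
    by (simp add: sum.distrib) (subst sum.swap, simp)
  also have "\<dots> = PZ n q z" unfolding PZ_def by (simp add: sum2)
  finally show ?thesis by simp
qed

lemma pvec_eq:
  assumes "\<forall>y<n. \<forall>dd<2. \<forall>z<2. obs n q' y dd z = obs n q y dd z" "y < n" "dd < 2" "z < 2"
  shows "pvec n q' y dd z = pvec n q y dd z"
proof -
  have "PZ n q' z = PZ n q z" unfolding PZ_obs using assms(1,4) by simp
  then show ?thesis unfolding pvec_def using assms by simp
qed

lemma dotv_eq:
  assumes "\<And>y dd z. y < n \<Longrightarrow> dd < 2 \<Longrightarrow> z < 2 \<Longrightarrow> p y dd z = p' y dd z"
  shows "dotv n v p = dotv n v p'"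
  unfolding dotv_def using assms by (intro sum.cong refl) auto

context vl begin

definition rB :: "(nat \<Rightarrow> nat \<Rightarrow> nat \<Rightarrow> bool) \<Rightarrow> nat \<Rightarrow> nat \<Rightarrow> nat \<Rightarrow> bool"
  where "rB B i dd z \<longleftrightarrow> B i dd z \<and> i < n \<and> dd < 2 \<and> z < 2"

lemma uvec_rB: "uvec g n \<alpha> B = uvec g n \<alpha> (rB B)"
  by (intro ext) (simp add: uvec_def rB_def)

definition Bs :: "(nat \<Rightarrow> nat \<Rightarrow> nat \<Rightarrow> bool) set" where "Bs = {B. \<forall>i dd z. B i dd z \<longrightarrow> i < n \<and> dd < 2 \<and> z < 2}"

lemma Bs_finite: "finite Bs"
proof -
  define h where "h B = {(i, dd, z). B i dd z}" for B :: "nat \<Rightarrow> nat \<Rightarrow> nat \<Rightarrow> bool"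
  have inj: "inj_on h Bs"
  proof
    fix B B' assume eq: "h B = h B'"
    have "B i dd z = B' i dd z" for i dd z
    proof -
      have "((i, dd, z) \<in> h B) = ((i, dd, z) \<in> h B')" using eq by simp
      then show ?thesis unfolding h_def by simp
    qed
    then show "B = B'" by (intro ext)
  qed
  have sub: "h ` Bs \<subseteq> Pow ({..<n} \<times> {..<2} \<times> {..<2})" unfolding h_def Bs_def by auto
  have fin: "finite (h ` Bs)" using sub by (rule finite_subset) simp
  show ?thesis by (rule finite_imageD[OF fin inj])
qed

lemma rB_in: "rB B \<in> Bs" unfolding rB_def Bs_def by auto

lemma Vset_finite: "finite (Vset g n)"
proof -
  define Al where "Al = (\<lambda>t. - g 0 - g t) ` {..<n} \<union> (\<lambda>t. - g t - g (n - 1)) ` {..<n}"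
  have "Vset g n \<subseteq> (\<lambda>(\<alpha>, B). uvec g n \<alpha> B) ` (Al \<times> Bs)"
  proof
    fix v assume "v \<in> Vset g n"
    then consider (a) t B where "S1 n t B" "v = uvec g n (- g 0 - g t) B"
      | (b) B where "S2 n B" "v = uvec g n (- g 0 - g (n - 1)) B"
      | (c) t B where "S3 n t B" "v = uvec g n (- g t - g (n - 1)) B"
      unfolding Vset_def by blast
    then show "v \<in> (\<lambda>(\<alpha>, B). uvec g n \<alpha> B) ` (Al \<times> Bs)"
    proof cases
      case a
      then have "t < n" unfolding S1_def by simp
      then have mem: "(- g 0 - g t, rB B) \<in> Al \<times> Bs" unfolding Al_def using rB_in by auto
      show ?thesis
        by (rule image_eqI[where x="(- g 0 - g t, rB B)"], simp only: a(2) prod.case uvec_rB[of "- g 0 - g t" B], rule mem)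
    next
      case b
      then have mem: "(- g 0 - g (n - 1), rB B) \<in> Al \<times> Bs" unfolding Al_def using rB_in n_pos by auto
      show ?thesis
        by (rule image_eqI[where x="(- g 0 - g (n - 1), rB B)"], simp only: b(2) prod.case uvec_rB[of "- g 0 - g (n - 1)" B], rule mem)
    next
      case c
      then have "t < n" unfolding S3_def by simp
      then have mem: "(- g t - g (n - 1), rB B) \<in> Al \<times> Bs" unfolding Al_def using rB_in by auto
      show ?thesis
        by (rule image_eqI[where x="(- g t - g (n - 1), rB B)"], simp only: c(2) prod.case uvec_rB[of "- g t - g (n - 1)" B], rule mem)
    qed
  qed
  moreover have "finite Al" unfolding Al_def by simp
  then have "finite (Al \<times> Bs)" using Bs_finite by (rule finite_cartesian_product)
  then have "finite ((\<lambda>(\<alpha>, B). uvec g n \<alpha> B) ` (Al \<times> Bs))" by (rule finite_imageI)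
  ultimately show ?thesis by (rule finite_subset)
qed

lemma main:
  "lower_bd g n q \<le> ATE g n q \<and>
   (\<exists>q'. valid_law n q' \<and> (\<forall>y<n. \<forall>dd<2. \<forall>z<2. obs n q' y dd z = obs n q y dd z) \<and> ATE g n q' = lower_bd g n q)"
proof -
  define W where "W = (\<lambda>v. dotv n v (pvec n q)) ` Vset g n"
  have lb: "lower_bd g n q = Max W" unfolding lower_bd_def W_def ..
  have finW: "finite W" unfolding W_def using Vset_finite by simp
  have neW: "W \<noteq> {}" unfolding W_def using S2_val by auto
  have le: "Max W \<le> ATE g n q" using finW neW V_valid unfolding W_def by (simp add: Max_le_iff)
  obtain l where lL: "l \<in> Lam" and H: "hfun l \<le> 0"
    "0 \<le> Dl - (\<Sum>i<n. if c i < l then m i else 0) + (\<Sum>i<n. if l \<le> d i then k i else 0)"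
    using sel by blast
  obtain q' where q'all: "valid_law n q' \<and> (\<forall>y<n. \<forall>dd<2. \<forall>z<2. obs n q' y dd z = obs n q y dd z)
    \<and> ATE g n q' = T l" using construct[OF lL H] by (rule exE)
  note q' = q'all[THEN conjunct1] q'all[THEN conjunct2, THEN conjunct1] q'all[THEN conjunct2, THEN conjunct2]
  obtain v where v: "v \<in> Vset g n" "T l \<le> dotv n v (pvec n q)" using cand[OF lL] by blast
  have "dotv n v (pvec n q) \<le> Max W" using finW v(1) unfolding W_def by simp
  then have ge: "T l \<le> Max W" using v(2) by simp
  interpret Q: vl g n q' using mono q'(1) by unfold_locales
  have "Max W \<le> ATE g n q'"
  proof -
    have "\<forall>u\<in>W. u \<le> ATE g n q'"
    proof
      fix u assume "u \<in> W"
      then obtain v where v: "v \<in> Vset g n" "u = dotv n v (pvec n q)" unfolding W_def by blast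
      have "dotv n v (pvec n q) = dotv n v (pvec n q')"
        by (rule dotv_eq) (simp add: pvec_eq[OF q'(2)])
      then show "u \<le> ATE g n q'" using Q.V_valid[OF v(1)] v(2) by simp
    qed
    then show ?thesis using finW neW by (simp add: Max_le_iff)
  qed
  then have "ATE g n q' = Max W" using ge q'(3) by simp
  then have eq: "ATE g n q' = lower_bd g n q" using lb by simp
  have ex: "\<exists>q'. valid_law n q' \<and> (\<forall>y<n. \<forall>dd<2. \<forall>z<2. obs n q' y dd z = obs n q y dd z) \<and> ATE g n q' = lower_bd g n q"
    by (rule exI[of _ q'], intro conjI, rule q'(1), rule q'(2), rule eq)
  have "lower_bd g n q \<le> ATE g n q" using le lb by simp
  then show ?thesis using ex by (rule conjI)
qed

end

definition swp :: "(nat \<Rightarrow> nat \<Rightarrow> nat \<Rightarrow> nat \<Rightarrow> real) \<Rightarrow> nat \<Rightarrow> nat \<Rightarrow> nat \<Rightarrow> nat \<Rightarrow> real"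
  where "swp q a b dd z = (if dd < 2 then q b a (1 - dd) z else 0)"

lemma swp_sumd: "(\<Sum>dd<2. swp q a b dd z) = (\<Sum>dd<2. q b a dd z)"
  by (simp add: sum2 swp_def)

lemma PZ_swp: "PZ n (swp q) z = PZ n q z"
  unfolding PZ_def by (simp add: swp_sumd) (rule sum.swap)

lemma PY_swp: "PY01 n (swp q) a b = PY01 n q b a"
proof -
  have "PY01 n (swp q) a b = (\<Sum>z<2. \<Sum>dd<2. swp q a b dd z)" unfolding PY01_def by (rule sum.swap)
  also have "\<dots> = (\<Sum>z<2. \<Sum>dd<2. q b a dd z)" by (simp only: swp_sumd)
  also have "\<dots> = PY01 n q b a" unfolding PY01_def by (rule sum.swap[symmetric])
  finally show ?thesis .
qed

lemma valid_swp: assumes v: "valid_law n q" shows "valid_law n (swp q)"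
proof -
  note vv = v[unfolded valid_law_def]
  have nn: "\<And>a b dd z. 0 \<le> q a b dd z" using vv[THEN conjunct1] by blast
  have z: "\<And>a b dd z. n \<le> a \<or> n \<le> b \<or> 2 \<le> dd \<or> 2 \<le> z \<Longrightarrow> q a b dd z = 0"
    using vv[THEN conjunct2, THEN conjunct1] by blast
  have t: "(\<Sum>a<n. \<Sum>b<n. \<Sum>dd<2. \<Sum>z<2. q a b dd z) = 1"
    using vv[THEN conjunct2, THEN conjunct2, THEN conjunct1] .
  have p: "\<forall>z<2. 0 < PZ n q z" using vv[THEN conjunct2, THEN conjunct2, THEN conjunct2, THEN conjunct1] .
  have i: "\<forall>a<n. \<forall>b<n. \<forall>z<2. (\<Sum>dd<2. q a b dd z) = PY01 n q a b * PZ n q z"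
    using vv[THEN conjunct2, THEN conjunct2, THEN conjunct2, THEN conjunct2] .
  show ?thesis unfolding valid_law_def
  proof (intro conjI allI impI)
    fix a b dd z
    show "0 \<le> swp q a b dd z" unfolding swp_def using nn by simp
    show "n \<le> a \<or> n \<le> b \<or> 2 \<le> dd \<or> 2 \<le> z \<Longrightarrow> swp q a b dd z = 0" unfolding swp_def using z by auto
  next
    have "(\<Sum>a<n. \<Sum>b<n. \<Sum>dd<2. \<Sum>z<2. swp q a b dd z) = (\<Sum>z<2. PZ n (swp q) z)"
      unfolding PZ_def by (simp add: sum2 sum.distrib)
    also have "\<dots> = (\<Sum>z<2. PZ n q z)" by (simp add: PZ_swp)
    also have "\<dots> = (\<Sum>a<n. \<Sum>b<n. \<Sum>dd<2. \<Sum>z<2. q a b dd z)"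
      unfolding PZ_def by (simp add: sum2 sum.distrib)
    finally show "(\<Sum>a<n. \<Sum>b<n. \<Sum>dd<2. \<Sum>z<2. swp q a b dd z) = 1" using t by simp
  next
    fix z :: nat assume "z < 2" then show "0 < PZ n (swp q) z" using p by (simp add: PZ_swp)
  next
    fix a b z :: nat assume "a < n" "b < n" "z < 2"
    then show "(\<Sum>dd<2. swp q a b dd z) = PY01 n (swp q) a b * PZ n (swp q) z"
      using i by (simp add: swp_sumd PY_swp PZ_swp)
  qed
qed

lemma obs_swp: assumes "y < n" "dd < 2" shows "obs n (swp q) y dd z = obs n q y (1 - dd) z"
proof -
  consider "dd = 0" | "dd = 1" using assms by linarith
  then show ?thesis
  proof cases
    case 1
    then show ?thesis using assms by (simp add: obs0 obs1s swp_def)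
  next
    case 2
    then show ?thesis using assms by (simp add: obs0 obs1s swp_def)
  qed
qed

lemma ATE_swp: "ATE g n (swp q) = - ATE g n q"
proof -
  have "ATE g n (swp q) = (\<Sum>a<n. \<Sum>b<n. (\<Sum>dd<2. \<Sum>z<2. q b a dd z) * (g b - g a))"
    unfolding ATE_def by (intro sum.cong refl) (simp add: sum2 swp_def algebra_simps)
  also have "\<dots> = (\<Sum>b<n. \<Sum>a<n. (\<Sum>dd<2. \<Sum>z<2. q b a dd z) * (g b - g a))" by (rule sum.swap)
  also have "\<dots> = (\<Sum>a<n. \<Sum>b<n. - ((\<Sum>dd<2. \<Sum>z<2. q a b dd z) * (g b - g a)))"
    by (intro sum.cong refl) (simp add: algebra_simps)
  also have "\<dots> = - (\<Sum>a<n. \<Sum>b<n. (\<Sum>dd<2. \<Sum>z<2. q a b dd z) * (g b - g a))"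
    by (simp add: sum_negf)
  also have "\<dots> = - ATE g n q" unfolding ATE_def by (simp add: sum_distrib_right)
  finally show ?thesis .
qed

lemma lower_swp: assumes "valid_law n q" shows "lower_bd g n (swp q) = - upper_bd g n q"
proof -
  have "dotv n v (pvec n (swp q)) = dotv n v (pbar n q)" for v
  proof (rule dotv_eq)
    fix y dd z :: nat assume "y < n" "dd < 2" "z < 2"
    then show "pvec n (swp q) y dd z = pbar n q y dd z"
      unfolding pvec_def pbar_def by (simp add: obs_swp PZ_swp)
  qed
  then show ?thesis unfolding lower_bd_def upper_bd_def by simp
qed

theorem theorem3:
  fixes \<gamma> :: "nat \<Rightarrow> real" and n :: nat
    and q :: "nat \<Rightarrow> nat \<Rightarrow> nat \<Rightarrow> nat \<Rightarrow> real"
  assumes mono: "\<And>i j. i < j \<Longrightarrow> j < n \<Longrightarrow> \<gamma> i < \<gamma> j"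
    and law: "valid_law n q"
  shows "lower_bd \<gamma> n q \<le> ATE \<gamma> n q \<and> ATE \<gamma> n q \<le> upper_bd \<gamma> n q \<and>
         (\<exists>q'. valid_law n q' \<and> (\<forall>y<n. \<forall>d<2. \<forall>z<2. obs n q' y d z = obs n q y d z)
               \<and> ATE \<gamma> n q' = lower_bd \<gamma> n q) \<and>
         (\<exists>q'. valid_law n q' \<and> (\<forall>y<n. \<forall>d<2. \<forall>z<2. obs n q' y d z = obs n q y d z)
               \<and> ATE \<gamma> n q' = upper_bd \<gamma> n q)"
proof -
  interpret Q: vl \<gamma> n q using mono law by unfold_locales
  interpret S: vl \<gamma> n "swp q" using mono valid_swp[OF law] by unfold_locales
  have m1: "lower_bd \<gamma> n q \<le> ATE \<gamma> n q" using Q.main by (rule conjunct1)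
  obtain q1 where q1all: "valid_law n q1 \<and> (\<forall>y<n. \<forall>d<2. \<forall>z<2. obs n q1 y d z = obs n q y d z)
     \<and> ATE \<gamma> n q1 = lower_bd \<gamma> n q" using Q.main[THEN conjunct2] by (rule exE)
  have "lower_bd \<gamma> n (swp q) \<le> ATE \<gamma> n (swp q)" using S.main by (rule conjunct1)
  then have m2: "ATE \<gamma> n q \<le> upper_bd \<gamma> n q" by (simp add: lower_swp[OF law] ATE_swp)
  obtain q2 where q2all: "valid_law n q2 \<and> (\<forall>y<n. \<forall>d<2. \<forall>z<2. obs n q2 y d z = obs n (swp q) y d z)
     \<and> ATE \<gamma> n q2 = lower_bd \<gamma> n (swp q)" using S.main[THEN conjunct2] by (rule exE)
  note q2 = q2all[THEN conjunct1] q2all[THEN conjunct2, THEN conjunct1] q2all[THEN conjunct2, THEN conjunct2]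
  have v2: "valid_law n (swp q2)" using valid_swp[OF q2(1)] .
  have o2: "\<forall>y<n. \<forall>d<2. \<forall>z<2. obs n (swp q2) y d z = obs n q y d z"
  proof (intro allI impI)
    fix y d z :: nat assume h: "y < n" "d < 2" "z < 2"
    have "1 - d < 2" by simp
    then have "obs n (swp q2) y d z = obs n (swp q) y (1 - d) z" using q2(2) h by (simp add: obs_swp)
    also have "\<dots> = obs n q y (1 - (1 - d)) z" using h by (simp add: obs_swp)
    also have "1 - (1 - d) = d" using h by simp
    finally show "obs n (swp q2) y d z = obs n q y d z" .
  qed
  have a2: "ATE \<gamma> n (swp q2) = upper_bd \<gamma> n q"
    using q2(3) by (simp add: ATE_swp lower_swp[OF law])
  have e2: "\<exists>q'. valid_law n q' \<and> (\<forall>y<n. \<forall>d<2. \<forall>z<2. obs n q' y d z = obs n q y d z)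
               \<and> ATE \<gamma> n q' = upper_bd \<gamma> n q"
    by (rule exI[of _ "swp q2"], intro conjI, rule v2, rule o2, rule a2)
  have e1: "\<exists>q'. valid_law n q' \<and> (\<forall>y<n. \<forall>d<2. \<forall>z<2. obs n q' y d z = obs n q y d z)
               \<and> ATE \<gamma> n q' = lower_bd \<gamma> n q"
    by (rule exI[of _ q1], rule q1all)
  show ?thesis using m1 m2 e1 e2 by (intro conjI)
qed

end
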